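(* In the roundabout exploration process described in the context, let $t\in[N]$ and let $r$ be an integer with $N\ge r\ge 2k+1$. If $|A(t)|\ge r$, then \[t\le\frac{2N-r}{r-2k}.\]
   Context: Let $n\ge 2$ and $k$ be natural numbers, $T$ a tree on an $n$-element vertex set $V$, and $N=2(n-1)$. Fix a root $r_0$ and a DFS tour of $T$ starting and ending at $r_0$ that traverses each edge of $T$ exactly twice, giving a cyclic vertex sequence $(v_1,\dots,v_N,v_{N+1})$ with $v_{N+1}=v_1=r_0$, and tour edges $e_i=\{v_i,v_{i+1}\}$ for $i\in[N]$. For $i,j\in[N]$ the circular interval $[\![i,j]\!]$ is $\{i,i+1,\dots,j\}$ if $i\le j$ and $\{i,\dots,N,1,\dots,j\}$ if $i>j$. Let $\langle G_1,\dots,G_N\rangle$ be graphs on $V$, each containing all but at most $k$ edges of $T$. Roundabout exploration process: agents $a_1,\dots,a_N$ with initial states $s_i(0)=i$. For steps $t=1,\dots,N$: (Movement) for every $i\in[N]$, if $s_i(t-1)=q$ then $s_i(t)=(q\bmod N)+1$ if $e_q\in E(G_t)$, and $s_i(t)=q$ otherwise. Let $D_i(t)=[\![i,s_i(t)]\!]$ and $D_i(0)=\{i\}$. (Elimination) $A(0)=\{a_1,\dots,a_N\}$; $A(t)$ is obtained from $A(t-1)$ by repeatedly removing an arbitrary agent $a_i$ of the current set with $D_i(t)\subseteq\bigcup D_j(t)$ over the other agents $a_j$ of the current set, until no such agent remains. *)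

theory Defs
  imports Complex_Main
begin

definition edges_on :: "'a set \<Rightarrow> 'a set set" where
  "edges_on V = {e. \<exists>x y. x \<in> V \<and> y \<in> V \<and> x \<noteq> y \<and> e = {x, y}}"

definition connected_on :: "'a set \<Rightarrow> 'a set set \<Rightarrow> bool" where
  "connected_on V E = (\<forall>x\<in>V. \<forall>y\<in>V. (x, y) \<in> {(a, b). {a, b} \<in> E}\<^sup>*)"

definition is_tree :: "'a set \<Rightarrow> 'a set set \<Rightarrow> bool" where
  "is_tree V E = (E \<subseteq> edges_on V \<and> connected_on V E \<and>
                  (\<forall>e\<in>E. \<not> connected_on V (E - {e})))"

definition is_dfs_tour :: "'a set set \<Rightarrow> 'a \<Rightarrow> nat \<Rightarrow> (nat \<Rightarrow> 'a) \<Rightarrow> bool" where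
  "is_dfs_tour E r0 N v = (v 1 = r0 \<and> v (N + 1) = r0 \<and>
      (\<forall>i\<in>{1..N}. {v i, v (Suc i)} \<in> E) \<and>
      (\<forall>e\<in>E. card {i\<in>{1..N}. {v i, v (Suc i)} = e} = 2))"

definition cint :: "nat \<Rightarrow> nat \<Rightarrow> nat \<Rightarrow> nat set" where
  "cint N i j = (if i \<le> j then {i..j} else {i..N} \<union> {1..j})"

fun agent_state :: "nat \<Rightarrow> (nat \<Rightarrow> 'a) \<Rightarrow> (nat \<Rightarrow> 'a set set) \<Rightarrow> nat \<Rightarrow> nat \<Rightarrow> nat" where
  "agent_state N v G i 0 = i"
| "agent_state N v G i (Suc t) =
     (let q = agent_state N v G i t in
      if {v q, v (Suc q)} \<in> G (Suc t) then q mod N + 1 else q)"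

definition Dset :: "nat \<Rightarrow> (nat \<Rightarrow> 'a) \<Rightarrow> (nat \<Rightarrow> 'a set set) \<Rightarrow> nat \<Rightarrow> nat \<Rightarrow> nat set" where
  "Dset N v G i t = (if t = 0 then {i} else cint N i (agent_state N v G i t))"

definition redundant :: "(nat \<Rightarrow> nat set) \<Rightarrow> nat set \<Rightarrow> nat \<Rightarrow> bool" where
  "redundant D S i = (i \<in> S \<and> D i \<subseteq> (\<Union>j\<in>S - {i}. D j))"

definition elim_step :: "(nat \<Rightarrow> nat set) \<Rightarrow> (nat set \<times> nat set) set" where
  "elim_step D = {(S, S - {i}) | S i. redundant D S i}"

definition elimination_outcome :: "(nat \<Rightarrow> nat set) \<Rightarrow> nat set \<Rightarrow> nat set \<Rightarrow> bool" where
  "elimination_outcome D S S' = ((S, S') \<in> (elim_step D)\<^sup>* \<and> (\<forall>i. \<not> redundant D S' i))"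

text \<open>A is a run of the roundabout process (agents identified with their indices).\<close>
definition roundabout_run :: "nat \<Rightarrow> (nat \<Rightarrow> 'a) \<Rightarrow> (nat \<Rightarrow> 'a set set) \<Rightarrow> (nat \<Rightarrow> nat set) \<Rightarrow> bool" where
  "roundabout_run N v G A = (A 0 = {1..N} \<and>
     (\<forall>t\<in>{1..N}. elimination_outcome (\<lambda>i. Dset N v G i t) (A (t - 1)) (A t)))"

end

theory Submission
  imports Defs
begin

definition arc :: "nat \<Rightarrow> int \<Rightarrow> nat \<Rightarrow> nat set" where
 "arc N lo c = {x\<in>{1..N}. \<exists>y::int. y mod int N = int x mod int N \<and> lo \<le> y \<and> y \<le> lo + int c}"

lemma arc_subset: "arc N lo c \<subseteq> {1..N}"
  by (auto simp: arc_def)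

lemma arc_shift: assumes "lo' mod int N = lo mod int N" shows "arc N lo' c = arc N lo c"
proof -
  have *: "arc N lo c \<subseteq> arc N lo' c" if "lo' mod int N = lo mod int N" for lo lo'
  proof
    fix x assume "x \<in> arc N lo c"
    then obtain y where y: "x\<in>{1..N}" "y mod int N = int x mod int N" "lo \<le> y" "y \<le> lo + int c"
      by (auto simp: arc_def)
    define y' where "y' = y + (lo' - lo)"
    have "int N dvd (lo' - lo)" using that by (simp add: mod_eq_dvd_iff)
    then have "y' mod int N = y mod int N" unfolding y'_def by (simp add: mod_eq_dvd_iff)
    then show "x \<in> arc N lo' c" using y unfolding arc_def y'_def by (auto intro!: exI[of _ "y + (lo' - lo)"])
  qed
  show ?thesis using *[OF assms] *[OF assms[symmetric]] by blast
qed

lemma arc_mod: "x \<in> arc N lo c \<longleftrightarrow> x \<in> {1..N} \<and> (int x - lo) mod int N \<le> int c"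
proof
  assume "x \<in> arc N lo c"
  then obtain y where y: "x\<in>{1..N}" "y mod int N = int x mod int N" "lo \<le> y" "y \<le> lo + int c"
    by (auto simp: arc_def)
  have "(int x - lo) mod int N = (y - lo) mod int N" using y(2) by (metis mod_diff_cong)
  also have "\<dots> \<le> y - lo" using y(3) by (simp add: zmod_le_nonneg_dividend)
  finally show "x \<in> {1..N} \<and> (int x - lo) mod int N \<le> int c" using y by simp
next
  assume h: "x \<in> {1..N} \<and> (int x - lo) mod int N \<le> int c"
  then have N: "int N > 0" by auto
  define y where "y = lo + (int x - lo) mod int N"
  have "y mod int N = int x mod int N" unfolding y_def
    by (metis add.commute diff_add_cancel mod_add_left_eq)
  moreover have "lo \<le> y" using N unfolding y_def by simp
  ultimately show "x \<in> arc N lo c" using h unfolding arc_def y_def by auto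
qed

lemma arc_pick: assumes "x \<in> arc N lo c"
  shows "\<exists>lo'. lo' mod int N = lo mod int N \<and> lo' \<le> int x \<and> int x \<le> lo' + int c"
proof -
  obtain y where y: "x\<in>{1..N}" "y mod int N = int x mod int N" "lo \<le> y" "y \<le> lo + int c"
    using assms by (auto simp: arc_def)
  have "int N dvd (int x - y)" using y(2) by (metis mod_eq_dvd_iff)
  then have "(lo + (int x - y)) mod int N = lo mod int N" by (simp add: mod_eq_dvd_iff)
  then show ?thesis using y by (intro exI[of _ "lo + (int x - y)"]) auto
qed

lemma arc_cover:
  assumes "\<forall>y. lo3 \<le> y \<and> y \<le> lo3 + int c3 \<longrightarrow> (lo1 \<le> y \<and> y \<le> lo1 + int c1) \<or> (lo2 \<le> y \<and> y \<le> lo2 + int c2)"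
  shows "arc N lo3 c3 \<subseteq> arc N lo1 c1 \<union> arc N lo2 c2"
  using assms unfolding arc_def by blast

lemma arc_image: assumes "0 < N"
  shows "arc N lo c = (\<lambda>y. nat ((y - 1) mod int N) + 1) ` {lo..lo + int c}"
proof
  show "arc N lo c \<subseteq> (\<lambda>y. nat ((y - 1) mod int N) + 1) ` {lo..lo + int c}"
  proof
    fix x assume "x \<in> arc N lo c"
    then obtain y where y: "x\<in>{1..N}" "y mod int N = int x mod int N" "lo \<le> y" "y \<le> lo + int c"
      by (auto simp: arc_def)
    have "(y - 1) mod int N = (int x - 1) mod int N" using y(2) by (metis mod_diff_cong)
    also have "\<dots> = int x - 1" using y(1) by (simp add: mod_pos_pos_trivial)
    finally have "x = nat ((y - 1) mod int N) + 1" using y(1) by auto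
    then show "x \<in> (\<lambda>y. nat ((y - 1) mod int N) + 1) ` {lo..lo + int c}" using y by auto
  qed
next
  show "(\<lambda>y. nat ((y - 1) mod int N) + 1) ` {lo..lo + int c} \<subseteq> arc N lo c"
  proof
    fix x assume "x \<in> (\<lambda>y. nat ((y - 1) mod int N) + 1) ` {lo..lo + int c}"
    then obtain y where y: "lo \<le> y" "y \<le> lo + int c" "x = nat ((y - 1) mod int N) + 1" by auto
    have b: "0 \<le> (y - 1) mod int N" "(y - 1) mod int N < int N" using assms by auto
    then have x: "x \<in> {1..N}" using y(3) by auto
    have "int x = (y - 1) mod int N + 1" using y(3) b by simp
    then have "int x mod int N = y mod int N"
      by (metis diff_add_cancel mod_add_left_eq)
    then show "x \<in> arc N lo c" using x y unfolding arc_def by auto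
  qed
qed

lemma card_arc: assumes "c < N" shows "card (arc N lo c) = c + 1"
proof -
  have N: "0 < N" using assms by simp
  have "inj_on (\<lambda>y. nat ((y - 1) mod int N) + 1) {lo..lo + int c}"
  proof
    fix y1 y2 assume y: "y1 \<in> {lo..lo + int c}" "y2 \<in> {lo..lo + int c}"
      and e: "nat ((y1 - 1) mod int N) + 1 = nat ((y2 - 1) mod int N) + 1"
    have "(y1 - 1) mod int N = (y2 - 1) mod int N" using e N
      by (metis Euclidean_Rings.pos_mod_sign add_right_cancel eq_nat_nat_iff of_nat_0_less_iff)
    then have "int N dvd (y1 - y2)" by (simp add: mod_eq_dvd_iff)
    then obtain q where q: "y1 - y2 = int N * q" by (auto simp: dvd_def)
    have "\<bar>y1 - y2\<bar> < int N" using y assms by auto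
    then have "q = 0" using q N
      by (smt (verit, ccfv_SIG) mult_le_cancel_left1 mult_minus_right)
    then show "y1 = y2" using q by simp
  qed
  then have "card (arc N lo c) = card {lo..lo + int c}" by (simp add: arc_image[OF N] card_image)
  then show ?thesis by simp
qed

lemma cint_arc:
  assumes i: "1 \<le> i" "i \<le> N" and c: "c < N"
  shows "cint N i ((i - 1 + c) mod N + 1) = arc N (int i) c"
proof (cases "i + c \<le> N")
  case True
  have s: "(i - 1 + c) mod N + 1 = i + c" using True i by simp
  show ?thesis unfolding s cint_def
  proof (simp, intro set_eqI iffI)
    fix x assume x: "x \<in> {i..i+c}"
    then have "(int x - int i) mod int N = int x - int i" using True i by (intro mod_pos_pos_trivial) auto
    then show "x \<in> arc N (int i) c" using x True i by (simp add: arc_mod)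
  next
    fix x assume x: "x \<in> arc N (int i) c"
    then have x1: "x \<in> {1..N}" "(int x - int i) mod int N \<le> int c" by (auto simp: arc_mod)
    show "x \<in> {i..i+c}"
    proof (cases "i \<le> x")
      case True
      then have "(int x - int i) mod int N = int x - int i" using x1 i by (intro mod_pos_pos_trivial) auto
      then show ?thesis using x1 True by simp
    next
      case False
      have "(int x - int i) mod int N = (int x - int i + int N) mod int N" by simp
      also have "\<dots> = int x - int i + int N" using False x1 i by (intro mod_pos_pos_trivial) auto
      finally show ?thesis using x1 False \<open>i + c \<le> N\<close> by simp
    qed
  qed
next
  case False
  have s: "(i - 1 + c) mod N + 1 = i + c - N" using False i c
    by (simp add: le_mod_geq)
  have lt: "\<not> i \<le> i + c - N" using False c by simp
  show ?thesis unfolding s cint_def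
  proof (simp only: lt if_False, intro set_eqI iffI)
    fix x assume x: "x \<in> {i..N} \<union> {1..i + c - N}"
    show "x \<in> arc N (int i) c"
    proof (cases "i \<le> x")
      case True
      then have "(int x - int i) mod int N = int x - int i" using x i c by (intro mod_pos_pos_trivial) auto
      then show ?thesis using x True i False c by (auto simp: arc_mod)
    next
      case F: False
      have "(int x - int i) mod int N = (int x - int i + int N) mod int N" by simp
      also have "\<dots> = int x - int i + int N" using F x i by (intro mod_pos_pos_trivial) auto
      finally show ?thesis using x F i False by (auto simp: arc_mod)
    qed
  next
    fix x assume x: "x \<in> arc N (int i) c"
    then have x1: "x \<in> {1..N}" "(int x - int i) mod int N \<le> int c" by (auto simp: arc_mod)
    show "x \<in> {i..N} \<union> {1..i + c - N}"
    proof (cases "i \<le> x")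
      case True
      then show ?thesis using x1 by simp
    next
      case F: False
      have "(int x - int i) mod int N = (int x - int i + int N) mod int N" by simp
      also have "\<dots> = int x - int i + int N" using F x1 i by (intro mod_pos_pos_trivial) auto
      finally show ?thesis using x1 F False by simp
    qed
  qed
qed

lemma state_formula:
  assumes i: "1 \<le> i" "i \<le> N"
  shows "agent_state N v G i \<tau> = (i - 1 + card {u\<in>{1..\<tau>}. {v (agent_state N v G i (u-1)), v (Suc (agent_state N v G i (u-1)))} \<in> G u}) mod N + 1"
proof (induction \<tau>)
  case 0
  then show ?case using i by simp
next
  case (Suc \<tau>)
  let ?P = "\<lambda>u. {v (agent_state N v G i (u-1)), v (Suc (agent_state N v G i (u-1)))} \<in> G u"
  have fin: "finite {u\<in>{1..\<tau>}. ?P u}" by simp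
  have split: "{u\<in>{1..Suc \<tau>}. ?P u} = {u\<in>{1..\<tau>}. ?P u} \<union> (if ?P (Suc \<tau>) then {Suc \<tau>} else {})"
    by (auto simp: le_Suc_eq)
  show ?case
  proof (cases "?P (Suc \<tau>)")
    case True
    have "card {u\<in>{1..Suc \<tau>}. ?P u} = Suc (card {u\<in>{1..\<tau>}. ?P u})"
      unfolding split using True fin by simp
    then show ?thesis using True Suc.IH i
      by (simp add: Let_def mod_Suc_eq)
  next
    case False
    have "card {u\<in>{1..Suc \<tau>}. ?P u} = card {u\<in>{1..\<tau>}. ?P u}"
      unfolding split using False by simp
    then show ?thesis using False Suc.IH by (simp add: Let_def)
  qed
qed

lemma state_same:
  assumes "agent_state N v G i a = agent_state N v G j a" "a \<le> b"
  shows "agent_state N v G i b = agent_state N v G j b"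
  using assms(2)
proof (induction b)
  case 0
  then show ?case using assms(1) by simp
next
  case (Suc b)
  show ?case
  proof (cases "a = Suc b")
    case True then show ?thesis using assms(1) by simp
  next
    case False then show ?thesis using Suc by (simp add: Let_def)
  qed
qed

lemma elim_subset: "(S, S') \<in> (elim_step D)\<^sup>* \<Longrightarrow> S' \<subseteq> S"
  by (induction rule: rtrancl_induct) (auto simp: elim_step_def)

lemma three_int:
  fixes p l1 l2 l3 :: int and c1 c2 c3 :: nat
  assumes "l1 \<le> p" "p \<le> l1 + c1" "l2 \<le> p" "p \<le> l2 + c2" "l3 \<le> p" "p \<le> l3 + c3"
  shows "(\<forall>y. l3 \<le> y \<and> y \<le> l3 + int c3 \<longrightarrow> (l1 \<le> y \<and> y \<le> l1 + int c1) \<or> (l2 \<le> y \<and> y \<le> l2 + int c2))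
       \<or> (\<forall>y. l2 \<le> y \<and> y \<le> l2 + int c2 \<longrightarrow> (l1 \<le> y \<and> y \<le> l1 + int c1) \<or> (l3 \<le> y \<and> y \<le> l3 + int c3))
       \<or> (\<forall>y. l1 \<le> y \<and> y \<le> l1 + int c1 \<longrightarrow> (l2 \<le> y \<and> y \<le> l2 + int c2) \<or> (l3 \<le> y \<and> y \<le> l3 + int c3))"
proof -
  have "(min l1 l2 \<le> l3 \<and> l3 + c3 \<le> max (l1 + c1) (l2 + c2))
      \<or> (min l1 l3 \<le> l2 \<and> l2 + c2 \<le> max (l1 + c1) (l3 + c3))
      \<or> (min l2 l3 \<le> l1 \<and> l1 + c1 \<le> max (l2 + c2) (l3 + c3))" by linarith
  then show ?thesis
  proof (elim disjE)
    assume h: "min l1 l2 \<le> l3 \<and> l3 + c3 \<le> max (l1 + c1) (l2 + c2)"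
    show ?thesis by (rule disjI1, intro allI impI) (use h assms in linarith)
  next
    assume h: "min l1 l3 \<le> l2 \<and> l2 + c2 \<le> max (l1 + c1) (l3 + c3)"
    show ?thesis by (rule disjI2, rule disjI1, intro allI impI) (use h assms in linarith)
  next
    assume h: "min l2 l3 \<le> l1 \<and> l1 + c1 \<le> max (l2 + c2) (l3 + c3)"
    show ?thesis by (rule disjI2, rule disjI2, intro allI impI) (use h assms in linarith)
  qed
qed

lemma endpoint_mod:
  assumes "1 \<le> i"
  shows "(int ((i - 1 + c) mod N + 1) - int c) mod int N = int i mod int N"
proof -
  have e: "int ((i - 1 + c) mod N + 1) = (int i - 1 + int c) mod int N + 1"
    using assms by (simp add: zmod_int of_nat_diff algebra_simps)
  have "int N dvd ((int i - 1 + int c) mod int N - (int i - 1 + int c))"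
    by (metis mod_eq_dvd_iff mod_mod_trivial)
  then have "int N dvd (int ((i - 1 + c) mod N + 1) - int c - int i)"
    unfolding e by (simp add: algebra_simps)
  then show ?thesis by (simp add: mod_eq_dvd_iff)
qed

lemma cint_sub: "1 \<le> i \<Longrightarrow> s \<le> N \<Longrightarrow> cint N i s \<subseteq> {1..N}"
  by (auto simp: cint_def)

lemma sum_ind_card: "finite X \<Longrightarrow> D \<subseteq> X \<Longrightarrow> (\<Sum>x\<in>X. if x \<in> D then 1 else 0) = (card D :: nat)"
  by (simp add: sum.If_cases Int_absorb1)

lemma card_filter_sum: "finite S \<Longrightarrow> (\<Sum>i\<in>S. if Q i then 1 else 0) = (card {i\<in>S. Q i} :: nat)"
  by (simp add: sum.If_cases Int_def conj_commute)

lemma three_obtain: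
  assumes "finite X" "2 < card X"
  obtains a b c where "a \<in> X" "b \<in> X" "c \<in> X" "a \<noteq> b" "a \<noteq> c" "b \<noteq> c"
proof -
  obtain a where a: "a \<in> X" using assms by fastforce
  have "1 < card (X - {a})" using assms a by simp
  then obtain b where b: "b \<in> X - {a}" by (metis card.empty ex_in_conv not_less_zero)
  have "0 < card (X - {a} - {b})" using assms a b by simp
  then obtain c where c: "c \<in> X - {a} - {b}" by (metis card.empty ex_in_conv less_irrefl)
  show ?thesis using a b c that by blast
qed

theorem lemma8:
  fixes V :: "'a set" and ET :: "'a set set" and r0 :: 'a and v :: "nat \<Rightarrow> 'a"
    and G :: "nat \<Rightarrow> 'a set set" and A :: "nat \<Rightarrow> nat set"
    and n k N t r :: nat
  assumes "finite V" and "card V = n" and "n \<ge> 2"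
    and "is_tree V ET"
    and "N = 2 * (n - 1)"
    and "r0 \<in> V"
    and "is_dfs_tour ET r0 N v"
    and "\<forall>s\<in>{1..N}. G s \<subseteq> edges_on V \<and> card (ET - G s) \<le> k"
    and "roundabout_run N v G A"
    and "t \<in> {1..N}"
    and "2 * k + 1 \<le> r" and "r \<le> N"
    and "card (A t) \<ge> r"
  shows "real t \<le> (2 * real N - real r) / (real r - 2 * real k)"
proof -
  have N2: "N \<ge> 2" using assms(3,5) by simp
  have t: "1 \<le> t" "t \<le> N" using assms(10) by auto
  have finET: "finite ET"
  proof -
    have "ET \<subseteq> Pow V" using assms(4) unfolding is_tree_def edges_on_def by auto
    then show ?thesis using assms(1) by (meson finite_Pow_iff finite_subset)
  qed
  have tour1: "\<forall>q\<in>{1..N}. {v q, v (Suc q)} \<in> ET"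
    and tour2: "\<forall>e\<in>ET. card {q\<in>{1..N}. {v q, v (Suc q)} = e} = 2"
    using assms(7) unfolding is_dfs_tour_def by auto
  have A0: "A 0 = {1..N}"
    and Arun: "\<And>\<tau>. \<tau> \<in> {1..N} \<Longrightarrow> elimination_outcome (\<lambda>i. Dset N v G i \<tau>) (A (\<tau> - 1)) (A \<tau>)"
    using assms(9) unfolding roundabout_run_def by auto
  have Adec: "A \<tau> \<subseteq> A (\<tau> - 1)" if "\<tau> \<in> {1..N}" for \<tau>
    using Arun[OF that] elim_subset unfolding elimination_outcome_def by blast
  have Anr: "\<not> redundant (\<lambda>i. Dset N v G i \<tau>) (A \<tau>) i" if "\<tau> \<in> {1..N}" for \<tau> i
    using Arun[OF that] unfolding elimination_outcome_def by blast
  have Asub: "\<tau> \<le> N \<Longrightarrow> A \<tau> \<subseteq> {1..N}" for \<tau>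
  proof (induction \<tau>)
    case 0 then show ?case using A0 by simp
  next
    case (Suc \<tau>) then show ?case using Adec[of "Suc \<tau>"] by auto
  qed
  define P where "P = (\<lambda>i u. {v (agent_state N v G i (u-1)), v (Suc (agent_state N v G i (u-1)))} \<in> G u)"
  define cnt where "cnt = (\<lambda>i \<tau>. card {u\<in>{1..\<tau>}. P i u})"
  have stf: "agent_state N v G i \<tau> = (i - 1 + cnt i \<tau>) mod N + 1" if "1 \<le> i" "i \<le> N" for i \<tau>
    using state_formula[OF that] unfolding cnt_def P_def by simp
  have st_range: "agent_state N v G i \<tau> \<in> {1..N}" if "1 \<le> i" "i \<le> N" for i \<tau>
    using stf[OF that] N2 by (simp add: Suc_le_eq)
  have cnt_le: "cnt i \<tau> \<le> \<tau>" for i \<tau>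
  proof -
    have "cnt i \<tau> \<le> card {1..\<tau>}" unfolding cnt_def by (intro card_mono) auto
    then show ?thesis by simp
  qed
  have cnt_Suc: "cnt i (Suc \<tau>) \<le> Suc (cnt i \<tau>)" for i \<tau>
  proof -
    have "{u\<in>{1..Suc \<tau>}. P i u} \<subseteq> insert (Suc \<tau>) {u\<in>{1..\<tau>}. P i u}" by (auto simp: le_Suc_eq)
    then have "cnt i (Suc \<tau>) \<le> card (insert (Suc \<tau>) {u\<in>{1..\<tau>}. P i u})"
      unfolding cnt_def by (intro card_mono) auto
    also have "\<dots> \<le> Suc (cnt i \<tau>)" unfolding cnt_def by (simp add: card_insert_if)
    finally show ?thesis .
  qed
  define S where "S = A t"
  define m where "m = card S"
  have S_sub: "S \<subseteq> {1..N}" using Asub t unfolding S_def by auto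
  have finS: "finite S" using S_sub finite_subset by blast
  have mr: "r \<le> m" using assms(13) unfolding m_def S_def .
  show ?thesis
  proof (cases "m \<le> 1")
    case True
    then have "r = 1" "k = 0" using mr assms(11) by auto
    then show ?thesis using t by simp
  next
    case False
    then have m2: "2 \<le> m" by simp
    have iS: "1 \<le> i" "i \<le> N" if "i \<in> S" for i using S_sub that by auto
    have other: "\<exists>j\<in>S. j \<noteq> i" for i
    proof -
      have "\<not> S \<subseteq> {i}"
      proof
        assume "S \<subseteq> {i}"
        then have "card S \<le> card {i}" by (intro card_mono) auto
        then show False using m2 unfolding m_def by simp
      qed
      then show ?thesis by blast
    qed
    have nonred: "\<not> Dset N v G i t \<subseteq> (\<Union>j\<in>S - {i}. Dset N v G j t)" if "i \<in> S" for i
      using Anr[OF assms(10), of i] that unfolding redundant_def S_def by auto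
    have cntlt: "cnt i t < N" if iS0: "i \<in> S" for i
    proof (rule ccontr)
      assume "\<not> cnt i t < N"
      then have tN: "t = N" using cnt_le[of i t] t by auto
      then have cN: "cnt i N = N" using cnt_le[of i t] \<open>\<not> cnt i t < N\<close> by auto
      have "cnt i N \<le> Suc (cnt i (N - 1))" using cnt_Suc[of i "N - 1"] N2 by (simp add: Suc_diff_1)
      then have c1: "cnt i (N - 1) = N - 1" using cN cnt_le[of i "N - 1"] by simp
      have N1: "N - 1 \<in> {1..N}" using N2 by auto
      have "Dset N v G i (N - 1) = cint N i ((i - 1 + cnt i (N-1)) mod N + 1)"
        unfolding Dset_def stf[OF iS[OF iS0]] using N2 by simp
      also have "\<dots> = arc N (int i) (N - 1)" unfolding c1 using iS[OF iS0] N2 by (intro cint_arc) auto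
      moreover have "arc N (int i) (N - 1) = {1..N}"
        using card_subset_eq[OF finite_atLeastAtMost arc_subset] card_arc[of "N - 1" N "int i"] N2
        by simp
      ultimately have full: "Dset N v G i (N - 1) = {1..N}" by simp
      obtain j where j: "j \<in> S" "j \<noteq> i" using other by blast
      have AN: "S \<subseteq> A (N - 1)" using Adec[of N] N2 tN unfolding S_def by auto
      have "Dset N v G j (N - 1) \<subseteq> {1..N}"
        using N2 iS[OF j(1)] st_range[OF iS[OF j(1)], of "N - 1"] cint_sub[of j "agent_state N v G j (N - 1)" N]
        by (simp add: Dset_def)
      then have "redundant (\<lambda>i. Dset N v G i (N - 1)) (A (N - 1)) j"
        unfolding redundant_def using AN j iS0 full by blast
      then show False using Anr[OF N1] by blast
    qed
    have Dt: "Dset N v G i t = arc N (int i) (cnt i t)" if "i \<in> S" for i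
    proof -
      have "Dset N v G i t = cint N i (agent_state N v G i t)" using t by (simp add: Dset_def)
      also have "\<dots> = cint N i ((i - 1 + cnt i t) mod N + 1)" using stf[OF iS[OF that]] by simp
      also have "\<dots> = arc N (int i) (cnt i t)" by (rule cint_arc[OF iS[OF that] cntlt[OF that]])
      finally show ?thesis .
    qed
    have cardD: "card (Dset N v G i t) = cnt i t + 1" if "i \<in> S" for i
      using Dt[OF that] card_arc cntlt[OF that] by simp
    have DsubN: "Dset N v G i t \<subseteq> {1..N}" if "i \<in> S" for i
      using Dt[OF that] arc_subset by simp
    have mult: "card {i\<in>S. x \<in> Dset N v G i t} \<le> 2" for x
    proof (rule ccontr)
      assume "\<not> ?thesis"
      then have c3: "2 < card {i\<in>S. x \<in> Dset N v G i t}" by simp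
      have fin': "finite {i\<in>S. x \<in> Dset N v G i t}" using finS by simp
      obtain a b c where abc: "a \<in> {i\<in>S. x \<in> Dset N v G i t}" "b \<in> {i\<in>S. x \<in> Dset N v G i t}"
        "c \<in> {i\<in>S. x \<in> Dset N v G i t}" "a \<noteq> b" "a \<noteq> c" "b \<noteq> c"
        by (rule three_obtain[OF fin' c3])
      have pick: "\<exists>lo. Dset N v G i t = arc N lo (cnt i t) \<and> lo \<le> int x \<and> int x \<le> lo + int (cnt i t)"
        if pi: "i \<in> S" "x \<in> Dset N v G i t" for i
      proof -
        obtain lo where "lo mod int N = int i mod int N" "lo \<le> int x" "int x \<le> lo + int (cnt i t)"
          using arc_pick[of x N "int i" "cnt i t"] pi(2) Dt[OF pi(1)] by auto
        then show ?thesis using arc_shift[of lo N "int i" "cnt i t"] Dt[OF pi(1)] by auto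
      qed
      obtain la where la: "Dset N v G a t = arc N la (cnt a t)" "la \<le> int x" "int x \<le> la + int (cnt a t)"
        using pick abc(1) by blast
      obtain lb where lb: "Dset N v G b t = arc N lb (cnt b t)" "lb \<le> int x" "int x \<le> lb + int (cnt b t)"
        using pick abc(2) by blast
      obtain lc where lc: "Dset N v G c t = arc N lc (cnt c t)" "lc \<le> int x" "int x \<le> lc + int (cnt c t)"
        using pick abc(3) by blast
      from three_int[OF la(2,3) lb(2,3) lc(2,3)] show False
      proof (elim disjE)
        assume h: "\<forall>y. lc \<le> y \<and> y \<le> lc + int (cnt c t) \<longrightarrow> la \<le> y \<and> y \<le> la + int (cnt a t) \<or> lb \<le> y \<and> y \<le> lb + int (cnt b t)"
        have "Dset N v G c t \<subseteq> Dset N v G a t \<union> Dset N v G b t"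
          unfolding la(1) lb(1) lc(1) by (rule arc_cover[OF h])
        then show False using nonred[of c] abc by blast
      next
        assume h: "\<forall>y. lb \<le> y \<and> y \<le> lb + int (cnt b t) \<longrightarrow> la \<le> y \<and> y \<le> la + int (cnt a t) \<or> lc \<le> y \<and> y \<le> lc + int (cnt c t)"
        have "Dset N v G b t \<subseteq> Dset N v G a t \<union> Dset N v G c t"
          unfolding la(1) lb(1) lc(1) by (rule arc_cover[OF h])
        then show False using nonred[of b] abc by blast
      next
        assume h: "\<forall>y. la \<le> y \<and> y \<le> la + int (cnt a t) \<longrightarrow> lb \<le> y \<and> y \<le> lb + int (cnt b t) \<or> lc \<le> y \<and> y \<le> lc + int (cnt c t)"
        have "Dset N v G a t \<subseteq> Dset N v G b t \<union> Dset N v G c t"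
          unfolding la(1) lb(1) lc(1) by (rule arc_cover[OF h])
        then show False using nonred[of a] abc by blast
      qed
    qed
    have sumD: "(\<Sum>i\<in>S. cnt i t + 1) \<le> 2 * N"
    proof -
      have "(\<Sum>i\<in>S. cnt i t + 1) = (\<Sum>i\<in>S. \<Sum>x\<in>{1..N}. if x \<in> Dset N v G i t then 1 else 0)"
        using cardD DsubN by (intro sum.cong) (auto simp: sum_ind_card)
      also have "\<dots> = (\<Sum>x\<in>{1..N}. \<Sum>i\<in>S. if x \<in> Dset N v G i t then 1 else 0)"
        by (rule sum.swap)
      also have "\<dots> = (\<Sum>x\<in>{1..N}. card {i\<in>S. x \<in> Dset N v G i t})"
        using finS by (simp add: card_filter_sum)
      also have "\<dots> \<le> (\<Sum>x\<in>{1..N}. 2)" by (intro sum_mono mult)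
      finally show ?thesis by simp
    qed
    have stuck: "card {i\<in>S. \<not> P i u} \<le> 2 * k" if u: "u \<in> {1..t}" for u
    proof -
      have inj: "inj_on (\<lambda>i. agent_state N v G i (u - 1)) S"
      proof
        fix i j assume ij: "i \<in> S" "j \<in> S" "agent_state N v G i (u - 1) = agent_state N v G j (u - 1)"
        show "i = j"
        proof (rule ccontr)
          assume ne: "i \<noteq> j"
          have "agent_state N v G i t = agent_state N v G j t"
            using state_same[OF ij(3)] u by auto
          then have e: "(i - 1 + cnt i t) mod N + 1 = (j - 1 + cnt j t) mod N + 1"
            using stf[OF iS[OF ij(1)]] stf[OF iS[OF ij(2)]] by simp
          define ee where "ee = (i - 1 + cnt i t) mod N + 1"
          have Di: "Dset N v G i t = arc N (int ee - int (cnt i t)) (cnt i t)"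
            using Dt[OF ij(1)] arc_shift[OF endpoint_mod[OF iS(1)[OF ij(1)]]] unfolding ee_def by simp
          have Dj: "Dset N v G j t = arc N (int ee - int (cnt j t)) (cnt j t)"
            using Dt[OF ij(2)] arc_shift[OF endpoint_mod[OF iS(1)[OF ij(2)]]] unfolding ee_def e by simp
          show False
          proof (cases "cnt i t \<le> cnt j t")
            case True
            have "Dset N v G i t \<subseteq> Dset N v G j t \<union> Dset N v G j t"
              unfolding Di Dj by (rule arc_cover) (use True in auto)
            then show False using nonred[OF ij(1)] ij ne by blast
          next
            case False
            have "Dset N v G j t \<subseteq> Dset N v G i t \<union> Dset N v G i t"
              unfolding Di Dj by (rule arc_cover) (use False in auto)
            then show False using nonred[OF ij(2)] ij ne by blast
          qed
        qed
      qed
      define B where "B = {q\<in>{1..N}. {v q, v (Suc q)} \<notin> G u}"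
      have img: "(\<lambda>i. agent_state N v G i (u - 1)) ` {i\<in>S. \<not> P i u} \<subseteq> B"
        using st_range iS unfolding B_def P_def by auto
      have "card {i\<in>S. \<not> P i u} = card ((\<lambda>i. agent_state N v G i (u - 1)) ` {i\<in>S. \<not> P i u})"
        using inj by (intro card_image[symmetric]) (auto intro: inj_on_subset)
      also have "\<dots> \<le> card B"
        using img by (intro card_mono) (auto simp: B_def)
      also have "card B \<le> 2 * k"
      proof -
        have "B \<subseteq> (\<Union>e\<in>ET - G u. {q\<in>{1..N}. {v q, v (Suc q)} = e})"
          using tour1 unfolding B_def by auto
        then have "card B \<le> card (\<Union>e\<in>ET - G u. {q\<in>{1..N}. {v q, v (Suc q)} = e})"
          using finET by (intro card_mono) auto
        also have "\<dots> \<le> (\<Sum>e\<in>ET - G u. card {q\<in>{1..N}. {v q, v (Suc q)} = e})"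
          using finET by (intro card_UN_le) auto
        also have "\<dots> = (\<Sum>e\<in>ET - G u. 2)" using tour2 by (intro sum.cong) auto
        also have "\<dots> = 2 * card (ET - G u)" by simp
        also have "\<dots> \<le> 2 * k" using assms(8) u t by auto
        finally show ?thesis .
      qed
      finally show ?thesis .
    qed
    have moving: "m \<le> card {i\<in>S. P i u} + 2 * k" if "u \<in> {1..t}" for u
    proof -
      have "m = card {i\<in>S. P i u} + card {i\<in>S. \<not> P i u}"
      proof -
        have "S = {i\<in>S. P i u} \<union> {i\<in>S. \<not> P i u}" by blast
        then have "card S = card ({i\<in>S. P i u} \<union> {i\<in>S. \<not> P i u})" by simp
        also have "\<dots> = card {i\<in>S. P i u} + card {i\<in>S. \<not> P i u}"
          using finS by (intro card_Un_disjoint) auto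
        finally show ?thesis unfolding m_def .
      qed
      then show ?thesis using stuck[OF that] by simp
    qed
    have sumcnt: "(\<Sum>i\<in>S. cnt i t) = (\<Sum>u\<in>{1..t}. card {i\<in>S. P i u})"
    proof -
      have "(\<Sum>i\<in>S. cnt i t) = (\<Sum>i\<in>S. \<Sum>u\<in>{1..t}. if P i u then 1 else 0)"
        unfolding cnt_def by (intro sum.cong) (auto simp: card_filter_sum)
      also have "\<dots> = (\<Sum>u\<in>{1..t}. \<Sum>i\<in>S. if P i u then 1 else 0)" by (rule sum.swap)
      also have "\<dots> = (\<Sum>u\<in>{1..t}. card {i\<in>S. P i u})" using finS by (simp add: card_filter_sum)
      finally show ?thesis .
    qed
    have "(\<Sum>u\<in>{1..t}. m) \<le> (\<Sum>u\<in>{1..t}. card {i\<in>S. P i u} + 2 * k)"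
      by (intro sum_mono moving)
    then have "t * m \<le> (\<Sum>i\<in>S. cnt i t) + t * (2 * k)" by (simp add: sum.distrib sumcnt)
    moreover have "(\<Sum>i\<in>S. cnt i t) + m \<le> 2 * N" 
    proof -
      have "(\<Sum>i\<in>S. cnt i t + 1) = (\<Sum>i\<in>S. cnt i t) + m" unfolding m_def by (simp only: sum.distrib) simp
      then show ?thesis using sumD by simp
    qed
    ultimately have key: "t * m + m \<le> 2 * N + t * (2 * k)" by linarith
    have "t * r + r \<le> t * m + m" using mr by (simp add: add_mono)
    with key have "t * r + r \<le> 2 * N + t * (2 * k)" by linarith
    then have "real (t * r + r) \<le> real (2 * N + t * (2 * k))" by (simp only: of_nat_le_iff)
    then have "real t * real r + real r \<le> 2 * real N + real t * (2 * real k)" by simp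
    then have "real t * (real r - 2 * real k) \<le> 2 * real N - real r" by (simp add: algebra_simps)
    moreover have "real r - 2 * real k > 0" using assms(11) by simp
    ultimately show ?thesis by (simp add: pos_le_divide_eq)
  qed
qed

end
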